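(* Let $d\ge1$, let $x_0\neq x_1\in\mathbb{R}^d$ have the same Euclidean norm, let $n_0,\dots,n_{M-1}$ be i.i.d. $\mathcal{N}(0,I_{d\times d})$, and let $\hat{x}_0,\hat{x}_1$ be the output of the soft-assignment algorithm with templates $x_0,x_1$. Then, almost surely as $M\to\infty$, $\hat{x}_0\to 2\,\mathbb{E}\left[\frac{n}{1+\exp(\langle n,x_1-x_0\rangle)}\right]$ and $\hat{x}_1\to-2\,\mathbb{E}\left[\frac{n}{1+\exp(\langle n,x_1-x_0\rangle)}\right]$, where $n\sim\mathcal{N}(0,I_{d\times d})$.
   Context: Soft-assignment algorithm: $p_i^{(\ell)}=\frac{\exp(\langle n_i,x_\ell\rangle)}{\exp(\langle n_i,x_0\rangle)+\exp(\langle n_i,x_1\rangle)}$ for $\ell\in\{0,1\}$, and $\hat{x}_\ell=\frac{\sum_{i=0}^{M-1}p_i^{(\ell)}n_i}{\sum_{i=0}^{M-1}p_i^{(\ell)}}$. *)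

theory Defs
  imports "HOL-Probability.Probability"
begin

definition std_gauss_density :: "real ^ 'd \<Rightarrow> real" where
  "std_gauss_density x = (2 * pi) powr (- real CARD('d) / 2) * exp (- (norm x)\<^sup>2 / 2)"

definition std_gauss_vec :: "(real ^ 'd) measure" where
  "std_gauss_vec = density lborel (\<lambda>x. ennreal (std_gauss_density x))"

text \<open>Soft-assignment weight p^(l) of a sample n for template xl (xl is x0 or x1).\<close>
definition soft_weight :: "real ^ 'd \<Rightarrow> real ^ 'd \<Rightarrow> real ^ 'd \<Rightarrow> real ^ 'd \<Rightarrow> real" where
  "soft_weight x0 x1 xl n = exp (n \<bullet> xl) / (exp (n \<bullet> x0) + exp (n \<bullet> x1))"

definition soft_est :: "real ^ 'd \<Rightarrow> real ^ 'd \<Rightarrow> real ^ 'd \<Rightarrow> (nat \<Rightarrow> real ^ 'd) \<Rightarrow> nat \<Rightarrow> real ^ 'd" where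
  "soft_est x0 x1 xl ns m =
     (\<Sum>i<m. soft_weight x0 x1 xl (ns i) *\<^sub>R ns i) /\<^sub>R (\<Sum>i<m. soft_weight x0 x1 xl (ns i))"

end

theory Submission
  imports Defs
begin


lemma sq_sandwich:
  fixes a :: "nat \<Rightarrow> real"
  assumes mono: "\<And>m. a m \<le> a (Suc m)" and nn: "\<And>m. 0 \<le> a m"
    and lim: "(\<lambda>k. a (k^2) / real (k^2)) \<longlonglongrightarrow> \<mu>"
  shows "(\<lambda>m. a m / real m) \<longlonglongrightarrow> \<mu>"
proof -
  have monoa: "a i \<le> a j" if "i \<le> j" for i j
    using lift_Suc_mono_le[of a, OF mono that] .
  define k where "k m = nat \<lfloor>sqrt (real m)\<rfloor>" for m
  have kle: "real (k m) \<le> sqrt (real m)" for m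
    unfolding k_def by simp
  have kgt: "sqrt (real m) < real (k m) + 1" for m
    unfolding k_def by linarith
  have k1: "(k m)^2 \<le> m" for m
  proof -
    have "real (k m) ^2 \<le> (sqrt (real m))^2" using kle by (intro power_mono) auto
    then have "real ((k m)^2) \<le> real m" by simp
    then show ?thesis by linarith
  qed
  have k2: "m < (k m + 1)^2" for m
  proof -
    have "(sqrt (real m))^2 < (real (k m) + 1) ^2" using kgt by (intro power_strict_mono) auto
    then have "real m < real ((k m + 1)^2)" by (simp add: add.commute)
    then show ?thesis by linarith
  qed
  have kpos: "k m \<ge> 1" if "m \<ge> 1" for m
    using k2[of m] that by (cases "k m") auto
  have klim: "filterlim k at_top sequentially"
  proof (subst filterlim_at_top, intro allI)
    fix Z :: nat
    show "eventually (\<lambda>m. Z \<le> k m) sequentially"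
    proof (rule eventually_sequentiallyI[of "Z^2"])
      fix m assume "Z^2 \<le> m"
      then have "real Z ^2 \<le> real m" by (metis of_nat_le_iff of_nat_power)
      then have "real Z \<le> sqrt (real m)" using real_le_rsqrt by blast
      then have "real Z < real (k m) + 1" using kgt[of m] by linarith
      then show "Z \<le> k m" by linarith
    qed
  qed
  have r1: "(\<lambda>j. real j ^2 / (real j + 1)^2) \<longlonglongrightarrow> 1"
  proof -
    have "(\<lambda>j. (real j / (real j + 1))^2) \<longlonglongrightarrow> 1^2"
      by (intro tendsto_power) (use LIMSEQ_n_over_Suc_n in \<open>simp add: add.commute\<close>)
    then show ?thesis by (simp add: power_divide)
  qed
  have r2: "(\<lambda>j. (real j + 1)^2 / real j ^2) \<longlonglongrightarrow> 1"
  proof -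
    have "(\<lambda>j. (real (Suc j) / real j)^2) \<longlonglongrightarrow> 1^2"
      by (intro tendsto_power LIMSEQ_Suc_n_over_n)
    then show ?thesis by (simp add: power_divide add.commute)
  qed
  have lim1: "(\<lambda>j. a (Suc j ^2) / real (Suc j ^2)) \<longlonglongrightarrow> \<mu>"
    using lim by (rule LIMSEQ_Suc)
  define lo where "lo j = a (j^2) / real (j^2) * (real j ^2 / (real j + 1)^2)" for j
  define up where "up j = a (Suc j^2) / real (Suc j^2) * ((real j + 1)^2 / real j ^2)" for j
  have lo: "lo \<longlonglongrightarrow> \<mu>" unfolding lo_def using tendsto_mult[OF lim r1] by simp
  have up: "up \<longlonglongrightarrow> \<mu>" unfolding up_def using tendsto_mult[OF lim1 r2] by simp
  show ?thesis
  proof (rule tendsto_sandwich[of "\<lambda>m. lo (k m)" _ _ "\<lambda>m. up (k m)"])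
    show "(\<lambda>m. lo (k m)) \<longlonglongrightarrow> \<mu>" using filterlim_compose[OF lo klim] .
    show "(\<lambda>m. up (k m)) \<longlonglongrightarrow> \<mu>" using filterlim_compose[OF up klim] .
    show "eventually (\<lambda>m. lo (k m) \<le> a m / real m) sequentially"
    proof (rule eventually_sequentiallyI[of 1])
      fix m :: nat assume m: "1 \<le> m"
      have kp: "k m \<ge> 1" using kpos[OF m] .
      have "lo (k m) = a (k m ^2) / (real (k m) + 1)^2"
        unfolding lo_def using kp by (simp add: field_simps)
      also have "\<dots> \<le> a m / (real (k m) + 1)^2"
        by (intro divide_right_mono monoa k1) auto
      also have "\<dots> \<le> a m / real m"
      proof (rule divide_left_mono)
        show "real m \<le> (real (k m) + 1)^2" using k2[of m]
          by (metis less_imp_le of_nat_1 of_nat_add of_nat_le_iff of_nat_power)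
      qed (use nn m in auto)
      finally show "lo (k m) \<le> a m / real m" .
    qed
    show "eventually (\<lambda>m. a m / real m \<le> up (k m)) sequentially"
    proof (rule eventually_sequentiallyI[of 1])
      fix m :: nat assume m: "1 \<le> m"
      have kp: "k m \<ge> 1" using kpos[OF m] .
      have "a m / real m \<le> a (Suc (k m) ^2) / real m"
        by (intro divide_right_mono monoa) (use k2[of m] in auto)
      also have "\<dots> \<le> a (Suc (k m) ^2) / real (k m)^2"
      proof (rule divide_left_mono)
        show "real (k m)^2 \<le> real m" using k1[of m]
          by (metis of_nat_le_iff of_nat_power)
      qed (use nn kp m in auto)
      also have "\<dots> = up (k m)"
        unfolding up_def using kp by (simp add: field_simps)
      finally show "a m / real m \<le> up (k m)" .
    qed
  qed
qed



lemma abs_mult_le_sq: "\<bar>a * b\<bar> \<le> a^2 + (b::real)^2"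
proof -
  have "0 \<le> (\<bar>a\<bar> - \<bar>b\<bar>)^2" by simp
  then have "2 * (\<bar>a\<bar> * \<bar>b\<bar>) \<le> \<bar>a\<bar>^2 + \<bar>b\<bar>^2" by (simp add: power2_diff)
  moreover have "0 \<le> \<bar>a\<bar> * \<bar>b\<bar>" by simp
  ultimately have "\<bar>a\<bar> * \<bar>b\<bar> \<le> \<bar>a\<bar>^2 + \<bar>b\<bar>^2" by linarith
  then show ?thesis by (simp add: abs_mult)
qed

lemma (in prob_space) slln_nonneg:
  fixes Y :: "nat \<Rightarrow> 'a \<Rightarrow> real"
  assumes rv[measurable]: "\<And>i. Y i \<in> borel_measurable M"
  and nn: "\<And>i \<omega>. 0 \<le> Y i \<omega>"
  and sq: "\<And>i. integrable M (\<lambda>\<omega>. (Y i \<omega>)^2)"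
  and mean: "\<And>i. expectation (Y i) = \<mu>"
  and sec: "\<And>i. expectation (\<lambda>\<omega>. (Y i \<omega>)^2) = s"
  and unc: "\<And>i j. i \<noteq> j \<Longrightarrow> expectation (\<lambda>\<omega>. Y i \<omega> * Y j \<omega>) = \<mu> * \<mu>"
  shows "AE \<omega> in M. (\<lambda>m. (\<Sum>i<m. Y i \<omega>) / real m) \<longlonglongrightarrow> \<mu>"
proof -
  have int: "integrable M (Y i)" for i using square_integrable_imp_integrable[OF rv sq] .
  have intp: "integrable M (\<lambda>\<omega>. Y i \<omega> * Y j \<omega>)" for i j
  proof (rule Bochner_Integration.integrable_bound[of _ "\<lambda>\<omega>. (Y i \<omega>)^2 + (Y j \<omega>)^2"])
    show "integrable M (\<lambda>\<omega>. (Y i \<omega>)\<^sup>2 + (Y j \<omega>)\<^sup>2)" using sq by auto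
    show "AE \<omega> in M. norm (Y i \<omega> * Y j \<omega>) \<le> norm ((Y i \<omega>)\<^sup>2 + (Y j \<omega>)\<^sup>2)"
      using abs_mult_le_sq by auto
  qed auto
  define Z where "Z i \<omega> = Y i \<omega> - \<mu>" for i \<omega>
  have intZ: "integrable M (\<lambda>\<omega>. Z i \<omega> * Z j \<omega>)" for i j
    unfolding Z_def using intp[of i j] int[of i] int[of j]
    by (simp add: algebra_simps)
  have cov: "expectation (\<lambda>\<omega>. Z i \<omega> * Z j \<omega>) = (if i = j then s - \<mu>^2 else 0)" for i j
  proof -
    have e: "(\<lambda>\<omega>. Z i \<omega> * Z j \<omega>) = (\<lambda>\<omega>. (Y i \<omega> * Y j \<omega> - \<mu> * Y i \<omega>) - (\<mu> * Y j \<omega> - \<mu> * \<mu>))"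
      unfolding Z_def by (auto simp: algebra_simps)
    have "expectation (\<lambda>\<omega>. Z i \<omega> * Z j \<omega>) = expectation (\<lambda>\<omega>. Y i \<omega> * Y j \<omega>) - \<mu> * \<mu> - (\<mu> * \<mu> - \<mu> * \<mu>)"
      unfolding e using intp[of i j] int[of i] int[of j]
      by (simp add: mean prob_space)
    also have "\<dots> = (if i = j then s - \<mu>^2 else 0)"
      using sec[of i] unc[of i j] by (auto simp: power2_eq_square)
    finally show ?thesis .
  qed
  define S where "S m \<omega> = (\<Sum>i<m. Y i \<omega>)" for m \<omega>
  have S_meas[measurable]: "S m \<in> borel_measurable M" for m unfolding S_def by measurable
  have Ssq: "(S m \<omega> - real m * \<mu>)^2 = (\<Sum>i<m. \<Sum>j<m. Z i \<omega> * Z j \<omega>)" for m \<omega>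
  proof -
    have "S m \<omega> - real m * \<mu> = (\<Sum>i<m. Z i \<omega>)"
      unfolding S_def Z_def by (simp add: sum_subtractf)
    then show ?thesis by (simp add: power2_eq_square sum_product)
  qed
  have var: "expectation (\<lambda>\<omega>. (S m \<omega> - real m * \<mu>)^2) = real m * (s - \<mu>^2)" for m
  proof -
    have "expectation (\<lambda>\<omega>. (S m \<omega> - real m * \<mu>)^2) = (\<Sum>i<m. \<Sum>j<m. expectation (\<lambda>\<omega>. Z i \<omega> * Z j \<omega>))"
      unfolding Ssq using intZ
      by (simp add: Bochner_Integration.integral_sum)
    also have "\<dots> = (\<Sum>i<m. s - \<mu>^2)"
      unfolding cov by (simp add: sum.delta)
    finally show ?thesis by simp
  qed
  have ES: "expectation (S m) = real m * \<mu>" for m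
    unfolding S_def using int by (simp add: Bochner_Integration.integral_sum mean)
  have sqS: "integrable M (\<lambda>\<omega>. (S m \<omega>)^2)" for m
  proof -
    have "(\<lambda>\<omega>. (S m \<omega>)^2) = (\<lambda>\<omega>. \<Sum>i<m. \<Sum>j<m. Y i \<omega> * Y j \<omega>)"
      unfolding S_def by (simp add: power2_eq_square sum_product)
    then show ?thesis using intp by simp
  qed
  have cheb: "prob {\<omega>\<in>space M. a \<le> \<bar>S m \<omega> - real m * \<mu>\<bar>} \<le> real m * (s - \<mu>^2) / a^2" if "a > 0" for a m
    using Chebyshev_inequality[OF S_meas sqS that, of m] unfolding ES var .
  have step: "AE \<omega> in M. eventually (\<lambda>k. \<bar>S (Suc k^2) \<omega> / real (Suc k^2) - \<mu>\<bar> < \<epsilon>) sequentially"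
    if eps: "\<epsilon> > 0" for \<epsilon>
  proof -
    define A where "A k = {\<omega>\<in>space M. \<epsilon> * real (Suc k^2) \<le> \<bar>S (Suc k^2) \<omega> - real (Suc k^2) * \<mu>\<bar>}" for k
    have A_sets[measurable]: "A k \<in> sets M" for k unfolding A_def by measurable
    have pA: "measure M (A k) \<le> (s - \<mu>^2) / \<epsilon>^2 * inverse (real (Suc k) ^ 2)" for k
    proof -
      have pos: "\<epsilon> * real (Suc k^2) > 0" using eps by simp
      have "measure M (A k) \<le> real (Suc k^2) * (s - \<mu>^2) / (\<epsilon> * real (Suc k^2))^2"
        unfolding A_def by (rule cheb[OF pos])
      also have "\<dots> = (s - \<mu>^2) / \<epsilon>^2 * inverse (real (Suc k^2))"
      proof -
        have gen: "N * v / (\<epsilon> * N)^2 = v / \<epsilon>^2 * inverse N" if "N > 0" for N v :: real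
          using that eps by (simp add: field_simps power2_eq_square)
        show ?thesis by (rule gen) simp
      qed
      also have "\<dots> = (s - \<mu>^2) / \<epsilon>^2 * inverse (real (Suc k) ^ 2)" by simp
      finally show ?thesis .
    qed
    have summ: "summable (\<lambda>k. measure M (A k))"
    proof (rule summable_comparison_test)
      show "\<exists>N. \<forall>n\<ge>N. norm (measure M (A n)) \<le> (s - \<mu>^2) / \<epsilon>^2 * inverse (real (Suc n) ^ 2)"
        using pA by auto
      have "summable (\<lambda>n. inverse (real (Suc n) ^ 2))"
        using inverse_power_summable[of 2, where 'a=real] by (subst summable_Suc_iff) simp
      then show "summable (\<lambda>n. (s - \<mu>^2) / \<epsilon>^2 * inverse (real (Suc n) ^ 2))"
        by (rule summable_mult)
    qed
    have "AE \<omega> in M. eventually (\<lambda>k. \<omega> \<in> space M - A k) sequentially"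
      by (rule borel_cantelli_AE1) (auto simp: summ less_top[symmetric])
    then show ?thesis
    proof (rule eventually_mono)
      fix \<omega> assume "eventually (\<lambda>k. \<omega> \<in> space M - A k) sequentially"
      then show "eventually (\<lambda>k. \<bar>S (Suc k^2) \<omega> / real (Suc k^2) - \<mu>\<bar> < \<epsilon>) sequentially"
      proof (rule eventually_mono)
        fix k assume "\<omega> \<in> space M - A k"
        then have h: "\<bar>S (Suc k^2) \<omega> - real (Suc k^2) * \<mu>\<bar> < \<epsilon> * real (Suc k^2)"
          unfolding A_def by auto
        have "S (Suc k^2) \<omega> / real (Suc k^2) - \<mu> = (S (Suc k^2) \<omega> - real (Suc k^2) * \<mu>) / real (Suc k^2)"
          by (simp add: field_simps)
        then have "\<bar>S (Suc k^2) \<omega> / real (Suc k^2) - \<mu>\<bar> = \<bar>S (Suc k^2) \<omega> - real (Suc k^2) * \<mu>\<bar> / real (Suc k^2)"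
          by simp
        also have "\<dots> < \<epsilon>" using h by (simp add: divide_less_eq)
        finally show "\<bar>S (Suc k^2) \<omega> / real (Suc k^2) - \<mu>\<bar> < \<epsilon>" .
      qed
    qed
  qed
  have "AE \<omega> in M. \<forall>r::nat. eventually (\<lambda>k. \<bar>S (Suc k^2) \<omega> / real (Suc k^2) - \<mu>\<bar> < inverse (real (Suc r))) sequentially"
    by (subst AE_all_countable) (intro allI step, simp)
  then show ?thesis
  proof (rule eventually_mono)
    fix \<omega> assume H: "\<forall>r::nat. eventually (\<lambda>k. \<bar>S (Suc k^2) \<omega> / real (Suc k^2) - \<mu>\<bar> < inverse (real (Suc r))) sequentially"
    have "(\<lambda>k. S (Suc k^2) \<omega> / real (Suc k^2)) \<longlonglongrightarrow> \<mu>"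
    proof (rule tendstoI)
      fix e :: real assume "e > 0"
      then obtain r where r: "inverse (real (Suc r)) < e" using reals_Archimedean by blast
      show "eventually (\<lambda>k. dist (S (Suc k^2) \<omega> / real (Suc k^2)) \<mu> < e) sequentially"
        using H[rule_format, of r] by (rule eventually_mono) (use r in \<open>auto simp: dist_real_def\<close>)
    qed
    then have "(\<lambda>k. S (k^2) \<omega> / real (k^2)) \<longlonglongrightarrow> \<mu>"
      using LIMSEQ_imp_Suc[of "\<lambda>k. S (k^2) \<omega> / real (k^2)"] by simp
    then have "(\<lambda>m. S m \<omega> / real m) \<longlonglongrightarrow> \<mu>"
      by (rule sq_sandwich[rotated 2]) (auto simp: S_def nn sum_nonneg)
    then show "(\<lambda>m. (\<Sum>i<m. Y i \<omega>) / real m) \<longlonglongrightarrow> \<mu>" by (simp add: S_def)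
  qed
qed



lemma std_gauss_density_nonneg: "0 \<le> std_gauss_density x"
  unfolding std_gauss_density_def by simp

lemma std_gauss_density_meas[measurable]: "std_gauss_density \<in> borel_measurable borel"
  unfolding std_gauss_density_def by measurable

lemma gauss_distr:
  assumes "distributed P lborel X (\<lambda>x. ennreal (std_gauss_density x))"
  shows "distr P lborel X = std_gauss_vec"
  using distributed_distr_eq_density[OF assms] unfolding std_gauss_vec_def .

lemma gauss_prob:
  fixes X :: "'p \<Rightarrow> real^'d"
  assumes "prob_space P" "distributed P lborel X (\<lambda>x. ennreal (std_gauss_density x))"
  shows "prob_space (std_gauss_vec :: (real^'d) measure)"
proof -
  have "prob_space (distr P lborel X)"
    by (rule prob_space.prob_space_distr[OF assms(1) distributed_measurable[OF assms(2)]])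
  then show ?thesis using gauss_distr[OF assms(2)] by simp
qed

lemma sets_gauss[simp, measurable_cong]: "sets std_gauss_vec = sets borel"
  unfolding std_gauss_vec_def by simp

lemma space_gauss[simp]: "space std_gauss_vec = UNIV"
  unfolding std_gauss_vec_def by simp

lemma gauss_uminus: "distr std_gauss_vec borel uminus = std_gauss_vec"
proof -
  have l: "distr lborel borel (uminus :: real^'a \<Rightarrow> _) = lborel"
    using lborel_affine[of "-1" "0::real^'a"] by (simp add: density_1)
  have "density (distr lborel borel uminus) (\<lambda>x. ennreal (std_gauss_density (x::real^'a)))
      = distr (density lborel (\<lambda>x. ennreal (std_gauss_density (- x)))) borel uminus"
    by (rule density_distr) auto
  also have "(\<lambda>x. ennreal (std_gauss_density (- x))) = (\<lambda>x. ennreal (std_gauss_density (x::real^'a)))"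
    unfolding std_gauss_density_def by simp
  finally show ?thesis unfolding l std_gauss_vec_def
    by (metis (no_types, lifting) distr_cong sets_density sets_lborel)
qed

lemma gauss_sym_integral:
  fixes g :: "real^'a \<Rightarrow> 'b::{banach, second_countable_topology}"
  assumes [measurable]: "g \<in> borel_measurable borel"
  shows "integral\<^sup>L std_gauss_vec (\<lambda>x. g (- x)) = integral\<^sup>L std_gauss_vec g"
proof -
  have "integral\<^sup>L std_gauss_vec (\<lambda>x. g (- x)) = integral\<^sup>L (distr std_gauss_vec borel uminus) g"
    by (rule integral_distr[symmetric]) auto
  then show ?thesis unfolding gauss_uminus .
qed

lemma gauss_sym_integrable:
  fixes g :: "real^'a \<Rightarrow> 'b::{banach, second_countable_topology}"
  assumes [measurable]: "g \<in> borel_measurable borel"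
  shows "integrable std_gauss_vec (\<lambda>x. g (- x)) \<longleftrightarrow> integrable std_gauss_vec g"
proof -
  have "integrable std_gauss_vec (\<lambda>x. g (- x)) \<longleftrightarrow> integrable (distr std_gauss_vec borel uminus) g"
    by (rule integrable_distr_eq[symmetric]) auto
  then show ?thesis unfolding gauss_uminus .
qed



lemma exp_bound_aux: "t * exp (- t / 2) \<le> 4 * exp (- t / 4)" for t :: real
proof -
  have "t / 4 \<le> exp (t / 4)" using exp_ge_add_one_self[of "t/4"] by linarith
  then have "t \<le> 4 * exp (t/4)" by simp
  then have "t * exp (- t / 2) \<le> 4 * exp (t/4) * exp (- t / 2)"
    by (rule mult_right_mono) simp
  also have "\<dots> = 4 * exp (- t / 4)" by (simp add: mult.assoc flip: exp_add)
  finally show ?thesis .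
qed

lemma gauss_sq_integrable:
  fixes X :: "'p \<Rightarrow> real^'d"
  assumes "prob_space P" "distributed P lborel X (\<lambda>x. ennreal (std_gauss_density x))"
  shows "integrable (std_gauss_vec :: (real^'d) measure) (\<lambda>x. (norm x)\<^sup>2)"
proof -
  define K :: real where "K = (2 * pi) powr (- real CARD('d) / 2)"
  have Kpos: "K > 0" unfolding K_def by simp
  have f_eq: "std_gauss_density x = K * exp (- (norm x)\<^sup>2 / 2)" for x :: "real^'d"
    unfolding std_gauss_density_def K_def ..
  interpret G: prob_space "std_gauss_vec :: (real^'d) measure" by (rule gauss_prob[OF assms])
  have one: "(\<integral>\<^sup>+ x. ennreal (std_gauss_density (x::real^'d)) \<partial>lborel) = 1"
  proof -
    have "emeasure (std_gauss_vec :: (real^'d) measure) UNIV = 1"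
      using G.emeasure_space_1 by simp
    then show ?thesis unfolding std_gauss_vec_def
      by (subst (asm) emeasure_density) auto
  qed
  define c :: real where "c = sqrt 2"
  have cpos: "c > 0" unfolding c_def by simp
  define h where "h y = ennreal (std_gauss_density (y /\<^sub>R c))" for y :: "real^'d"
  have h_meas[measurable]: "h \<in> borel_measurable borel" unfolding h_def by measurable
  have hint: "(\<integral>\<^sup>+ y. h y \<partial>lborel) = ennreal (c ^ CARD('d))"
  proof -
    have "(\<integral>\<^sup>+ y. h y \<partial>lborel) =
      (\<integral>\<^sup>+ y. h y \<partial>density (distr lborel borel (\<lambda>x. 0 + c *\<^sub>R x)) (\<lambda>_. ennreal (\<bar>c\<bar> ^ DIM(real^'d))))"
      using lborel_affine[of c "0::real^'d"] cpos by simp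
    also have "\<dots> = (\<integral>\<^sup>+ y. ennreal (\<bar>c\<bar> ^ DIM(real^'d)) * h y \<partial>distr lborel borel (\<lambda>x. 0 + c *\<^sub>R x))"
      by (rule nn_integral_density) auto
    also have "\<dots> = (\<integral>\<^sup>+ x. ennreal (\<bar>c\<bar> ^ DIM(real^'d)) * h (0 + c *\<^sub>R x) \<partial>lborel)"
      by (rule nn_integral_distr) auto
    also have "\<dots> = (\<integral>\<^sup>+ x. ennreal (c ^ CARD('d)) * ennreal (std_gauss_density (x::real^'d)) \<partial>lborel)"
      unfolding h_def using cpos by simp
    also have "\<dots> = ennreal (c ^ CARD('d)) * (\<integral>\<^sup>+ x. ennreal (std_gauss_density (x::real^'d)) \<partial>lborel)"
      by (rule nn_integral_cmult) auto
    finally show ?thesis unfolding one by simp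
  qed
  have pw: "ennreal (std_gauss_density x) * ennreal ((norm x)\<^sup>2) \<le> 4 * h x" for x :: "real^'d"
  proof -
    have n2: "(norm (x /\<^sub>R c))^2 = (norm x)\<^sup>2 / 2"
      using cpos unfolding c_def by (simp add: power_mult_distrib power_inverse)
    have "std_gauss_density x * (norm x)\<^sup>2 = K * ((norm x)\<^sup>2 * exp (- (norm x)\<^sup>2 / 2))"
      unfolding f_eq by simp
    also have "\<dots> \<le> K * (4 * exp (- (norm x)\<^sup>2 / 4))"
      using Kpos exp_bound_aux[of "(norm x)\<^sup>2"] by (intro mult_left_mono) auto
    also have "\<dots> = 4 * std_gauss_density (x /\<^sub>R c)"
      unfolding f_eq n2 by simp
    finally have "std_gauss_density x * (norm x)\<^sup>2 \<le> 4 * std_gauss_density (x /\<^sub>R c)" .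
    then show ?thesis unfolding h_def
      by (simp add: ennreal_mult'[symmetric] std_gauss_density_nonneg ennreal_leI flip: ennreal_numeral)
  qed
  have "(\<integral>\<^sup>+ x. ennreal (norm ((norm x)\<^sup>2)) \<partial>(std_gauss_vec :: (real^'d) measure)) =
        (\<integral>\<^sup>+ x. ennreal (std_gauss_density (x::real^'d)) * ennreal ((norm x)\<^sup>2) \<partial>lborel)"
    unfolding std_gauss_vec_def by (subst nn_integral_density) auto
  also have "\<dots> \<le> (\<integral>\<^sup>+ x. 4 * h x \<partial>lborel)"
    by (rule nn_integral_mono) (rule pw)
  also have "\<dots> = 4 * (\<integral>\<^sup>+ x. h x \<partial>lborel)"
    by (rule nn_integral_cmult) auto
  also have "\<dots> < \<infinity>" unfolding hint by (simp add: ennreal_mult_less_top)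
  finally show ?thesis by (intro integrableI_bounded) auto
qed



lemma slln_gauss_nonneg:
  fixes P :: "'w measure" and N :: "nat \<Rightarrow> 'w \<Rightarrow> real^'d" and g :: "real^'d \<Rightarrow> real"
  assumes P: "prob_space P"
    and ind: "prob_space.indep_vars P (\<lambda>_. borel) N UNIV"
    and dist: "\<And>i. distributed P lborel (N i) (\<lambda>x. ennreal (std_gauss_density x))"
    and g[measurable]: "g \<in> borel_measurable borel"
    and nn: "\<And>x. 0 \<le> g x"
    and sq: "integrable std_gauss_vec (\<lambda>x. (g x)^2)"
  shows "AE \<omega> in P. (\<lambda>m. (\<Sum>i<m. g (N i \<omega>)) / real m) \<longlonglongrightarrow> integral\<^sup>L std_gauss_vec g"
proof -
  interpret prob_space P by (rule P)
  interpret G: prob_space "std_gauss_vec :: (real^'d) measure" by (rule gauss_prob[OF P dist])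
  have Nm[measurable]: "N i \<in> measurable P borel" for i
    using distributed_measurable[OF dist[of i]] by simp
  have D: "distr P lborel (N i) = std_gauss_vec" for i by (rule gauss_distr[OF dist])
  have tr_int: "integral\<^sup>L P (\<lambda>\<omega>. h (N i \<omega>)) = integral\<^sup>L std_gauss_vec h"
    if [measurable]: "h \<in> borel_measurable borel" for h :: "real^'d \<Rightarrow> real" and i
  proof -
    have "integral\<^sup>L (distr P lborel (N i)) h = integral\<^sup>L P (\<lambda>\<omega>. h (N i \<omega>))"
      by (rule integral_distr) auto
    then show ?thesis unfolding D by simp
  qed
  have tr_ble: "integrable P (\<lambda>\<omega>. h (N i \<omega>)) \<longleftrightarrow> integrable std_gauss_vec h"
    if [measurable]: "h \<in> borel_measurable borel" for h :: "real^'d \<Rightarrow> real" and i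
  proof -
    have "integrable (distr P lborel (N i)) h \<longleftrightarrow> integrable P (\<lambda>\<omega>. h (N i \<omega>))"
      by (rule integrable_distr_eq) auto
    then show ?thesis unfolding D by simp
  qed
  have gint: "integrable std_gauss_vec g"
    by (rule G.square_integrable_imp_integrable) (auto simp: sq)
  show ?thesis
  proof (rule slln_nonneg)
    show "random_variable borel (\<lambda>\<omega>. g (N i \<omega>))" for i by measurable
    show "0 \<le> g (N i \<omega>)" for i \<omega> by (rule nn)
    show "integrable P (\<lambda>\<omega>. (g (N i \<omega>))\<^sup>2)" for i
      using tr_ble[of "\<lambda>x. (g x)^2" i] sq by simp
    show "expectation (\<lambda>\<omega>. g (N i \<omega>)) = integral\<^sup>L std_gauss_vec g" for i
      by (rule tr_int) simp
    show "expectation (\<lambda>\<omega>. (g (N i \<omega>))\<^sup>2) = integral\<^sup>L std_gauss_vec (\<lambda>x. (g x)^2)" for i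
      by (rule tr_int) simp
    show "expectation (\<lambda>\<omega>. g (N i \<omega>) * g (N j \<omega>)) = integral\<^sup>L std_gauss_vec g * integral\<^sup>L std_gauss_vec g"
      if ij: "i \<noteq> j" for i j
    proof -
      have "indep_vars (\<lambda>_. borel) (\<lambda>k \<omega>. g (N k \<omega>)) UNIV"
        by (rule indep_vars_compose2[OF ind]) auto
      then have I: "indep_vars (\<lambda>_. borel) (\<lambda>k \<omega>. g (N k \<omega>)) {i, j}"
        by (rule indep_vars_subset) auto
      have "expectation (\<lambda>\<omega>. \<Prod>k\<in>{i,j}. g (N k \<omega>)) = (\<Prod>k\<in>{i,j}. expectation (\<lambda>\<omega>. g (N k \<omega>)))"
        by (rule indep_vars_lebesgue_integral[OF _ I]) (use tr_ble gint in auto)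
      then show ?thesis using ij tr_int[OF g] by simp
    qed
  qed
qed

lemma slln_gauss:
  fixes P :: "'w measure" and N :: "nat \<Rightarrow> 'w \<Rightarrow> real^'d" and g :: "real^'d \<Rightarrow> real"
  assumes P: "prob_space P"
    and ind: "prob_space.indep_vars P (\<lambda>_. borel) N UNIV"
    and dist: "\<And>i. distributed P lborel (N i) (\<lambda>x. ennreal (std_gauss_density x))"
    and g[measurable]: "g \<in> borel_measurable borel"
    and sq: "integrable std_gauss_vec (\<lambda>x. (g x)^2)"
  shows "AE \<omega> in P. (\<lambda>m. (\<Sum>i<m. g (N i \<omega>)) / real m) \<longlonglongrightarrow> integral\<^sup>L std_gauss_vec g"
proof -
  interpret G: prob_space "std_gauss_vec :: (real^'d) measure" by (rule gauss_prob[OF P dist])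
  define gp where "gp x = max (g x) 0" for x
  define gm where "gm x = max (- g x) 0" for x
  have [measurable]: "gp \<in> borel_measurable borel" "gm \<in> borel_measurable borel"
    unfolding gp_def gm_def by measurable
  have sqp: "integrable std_gauss_vec (\<lambda>x. (gp x)^2)"
  proof (rule Bochner_Integration.integrable_bound[OF sq])
    show "(\<lambda>x. (gp x)^2) \<in> borel_measurable std_gauss_vec" by measurable
    show "AE x in std_gauss_vec. norm ((gp x)^2) \<le> norm ((g x)^2)"
      by (rule AE_I2) (auto simp: gp_def max_def)
  qed
  have sqm: "integrable std_gauss_vec (\<lambda>x. (gm x)^2)"
  proof (rule Bochner_Integration.integrable_bound[OF sq])
    show "(\<lambda>x. (gm x)^2) \<in> borel_measurable std_gauss_vec" by measurable
    show "AE x in std_gauss_vec. norm ((gm x)^2) \<le> norm ((g x)^2)"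
      by (rule AE_I2) (auto simp: gm_def max_def)
  qed
  have ip: "integrable std_gauss_vec gp"
    by (rule G.square_integrable_imp_integrable) (auto simp: sqp)
  have im: "integrable std_gauss_vec gm"
    by (rule G.square_integrable_imp_integrable) (auto simp: sqm)
  have split: "g x = gp x - gm x" for x unfolding gp_def gm_def by auto
  have Ag: "integral\<^sup>L std_gauss_vec g = integral\<^sup>L std_gauss_vec gp - integral\<^sup>L std_gauss_vec gm"
    unfolding split using ip im by simp
  have Ap: "AE \<omega> in P. (\<lambda>m. (\<Sum>i<m. gp (N i \<omega>)) / real m) \<longlonglongrightarrow> integral\<^sup>L std_gauss_vec gp"
    by (rule slln_gauss_nonneg[OF P ind dist _ _ sqp]) (auto simp: gp_def)
  have Am: "AE \<omega> in P. (\<lambda>m. (\<Sum>i<m. gm (N i \<omega>)) / real m) \<longlonglongrightarrow> integral\<^sup>L std_gauss_vec gm"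
    by (rule slln_gauss_nonneg[OF P ind dist _ _ sqm]) (auto simp: gm_def)
  show ?thesis
    using Ap Am
  proof (eventually_elim)
    case (elim \<omega>)
    have "(\<lambda>m. (\<Sum>i<m. gp (N i \<omega>)) / real m - (\<Sum>i<m. gm (N i \<omega>)) / real m)
        \<longlonglongrightarrow> integral\<^sup>L std_gauss_vec gp - integral\<^sup>L std_gauss_vec gm"
      using elim by (intro tendsto_diff)
    moreover have "(\<Sum>i<m. gp (N i \<omega>)) / real m - (\<Sum>i<m. gm (N i \<omega>)) / real m = (\<Sum>i<m. g (N i \<omega>)) / real m" for m
      unfolding split by (simp add: sum_subtractf diff_divide_distrib)
    ultimately show ?case unfolding Ag by simp
  qed
qed



lemma vec_slln:
  fixes P :: "'w measure" and N :: "nat \<Rightarrow> 'w \<Rightarrow> real^'d" and w :: "real^'d \<Rightarrow> real"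
  assumes P: "prob_space P"
    and ind: "prob_space.indep_vars P (\<lambda>_. borel) N UNIV"
    and dist: "\<And>i. distributed P lborel (N i) (\<lambda>x. ennreal (std_gauss_density x))"
    and w[measurable]: "w \<in> borel_measurable borel"
    and wb: "\<And>x. \<bar>w x\<bar> \<le> 1"
  shows "AE \<omega> in P. (\<lambda>m. (\<Sum>i<m. w (N i \<omega>) *\<^sub>R N i \<omega>) /\<^sub>R real m)
            \<longlonglongrightarrow> integral\<^sup>L std_gauss_vec (\<lambda>n. w n *\<^sub>R n)"
proof -
  interpret G: prob_space "std_gauss_vec :: (real^'d) measure" by (rule gauss_prob[OF P dist])
  have sqn: "integrable (std_gauss_vec :: (real^'d) measure) (\<lambda>x. (norm x)\<^sup>2)"
    by (rule gauss_sq_integrable[OF P dist])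
  have nint: "integrable (std_gauss_vec :: (real^'d) measure) (\<lambda>x. norm x)"
    by (rule G.square_integrable_imp_integrable) (auto simp: sqn)
  have vint: "integrable std_gauss_vec (\<lambda>n::real^'d. w n *\<^sub>R n)"
  proof (rule Bochner_Integration.integrable_bound[OF nint])
    show "AE x in std_gauss_vec. norm (w x *\<^sub>R x) \<le> norm (norm x)"
    proof (rule AE_I2)
      fix x :: "real^'d"
      have "\<bar>w x\<bar> * norm x \<le> 1 * norm x" by (rule mult_right_mono[OF wb]) simp
      then show "norm (w x *\<^sub>R x) \<le> norm (norm x)" by simp
    qed
  qed measurable
  have comp: "AE \<omega> in P. (\<lambda>m. (\<Sum>i<m. w (N i \<omega>) * N i \<omega> $ j) / real m)
            \<longlonglongrightarrow> integral\<^sup>L std_gauss_vec (\<lambda>n. w n * n $ j)" for j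
  proof (rule slln_gauss[OF P ind dist])
    show "integrable std_gauss_vec (\<lambda>x. (w x * x $ j)\<^sup>2)"
    proof (rule Bochner_Integration.integrable_bound[OF sqn])
      show "AE x in std_gauss_vec. norm ((w x * x $ j)\<^sup>2) \<le> norm ((norm x)\<^sup>2)"
      proof (rule AE_I2)
        fix x :: "real^'d"
        have "\<bar>w x * x $ j\<bar> \<le> norm x"
        proof -
          have "\<bar>w x\<bar> * \<bar>x $ j\<bar> \<le> 1 * norm x"
            by (rule mult_mono[OF wb component_le_norm_cart]) auto
          then show ?thesis by (simp add: abs_mult)
        qed
        then have "(w x * x $ j)\<^sup>2 \<le> (norm x)\<^sup>2"
          using power_mono[of "\<bar>w x * x $ j\<bar>" "norm x" 2] by simp
        then show "norm ((w x * x $ j)\<^sup>2) \<le> norm ((norm x)\<^sup>2)" by simp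
      qed
    qed measurable
  qed measurable
  have "AE \<omega> in P. \<forall>j\<in>UNIV. (\<lambda>m. (\<Sum>i<m. w (N i \<omega>) * N i \<omega> $ j) / real m)
            \<longlonglongrightarrow> integral\<^sup>L std_gauss_vec (\<lambda>n. w n * n $ j)"
    by (rule AE_finite_allI) (auto intro: comp)
  then show ?thesis
  proof (rule eventually_mono)
    fix \<omega> assume H: "\<forall>j\<in>UNIV. (\<lambda>m. (\<Sum>i<m. w (N i \<omega>) * N i \<omega> $ j) / real m)
            \<longlonglongrightarrow> integral\<^sup>L std_gauss_vec (\<lambda>n. w n * n $ j)"
    show "(\<lambda>m. (\<Sum>i<m. w (N i \<omega>) *\<^sub>R N i \<omega>) /\<^sub>R real m)
            \<longlonglongrightarrow> integral\<^sup>L std_gauss_vec (\<lambda>n. w n *\<^sub>R n)"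
    proof (rule vec_tendstoI)
      fix j
      have "integral\<^sup>L std_gauss_vec (\<lambda>n. (w n *\<^sub>R n) $ j) = integral\<^sup>L std_gauss_vec (\<lambda>n. w n *\<^sub>R n) $ j"
        by (rule integral_bounded_linear[OF bounded_linear_vec_nth vint])
      then have e: "integral\<^sup>L std_gauss_vec (\<lambda>n. w n *\<^sub>R n) $ j = integral\<^sup>L std_gauss_vec (\<lambda>n. w n * n $ j)"
        by simp
      have "((\<Sum>i<m. w (N i \<omega>) *\<^sub>R N i \<omega>) /\<^sub>R real m) $ j = (\<Sum>i<m. w (N i \<omega>) * N i \<omega> $ j) / real m" for m
        by (simp add: divide_inverse_commute)
      then show "(\<lambda>m. ((\<Sum>i<m. w (N i \<omega>) *\<^sub>R N i \<omega>) /\<^sub>R real m) $ j)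
            \<longlonglongrightarrow> integral\<^sup>L std_gauss_vec (\<lambda>n. w n *\<^sub>R n) $ j"
        unfolding e using H by simp
    qed
  qed
qed



lemma ratio_lim:
  fixes A :: "nat \<Rightarrow> 'a::real_normed_vector" and B :: "nat \<Rightarrow> real"
  assumes "(\<lambda>m. A m /\<^sub>R real m) \<longlonglongrightarrow> a" "(\<lambda>m. B m / real m) \<longlonglongrightarrow> b" "b \<noteq> 0"
  shows "(\<lambda>m. A m /\<^sub>R B m) \<longlonglongrightarrow> a /\<^sub>R b"
proof -
  have "(\<lambda>m. inverse (B m / real m) *\<^sub>R (A m /\<^sub>R real m)) \<longlonglongrightarrow> inverse b *\<^sub>R a"
    by (intro tendsto_scaleR tendsto_inverse assms)
  moreover have "eventually (\<lambda>m. inverse (B m / real m) *\<^sub>R (A m /\<^sub>R real m) = A m /\<^sub>R B m) sequentially"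
  proof (rule eventually_sequentiallyI[of 1])
    fix m :: nat assume "1 \<le> m"
    then have "real m \<noteq> 0" by simp
    then show "inverse (B m / real m) *\<^sub>R (A m /\<^sub>R real m) = A m /\<^sub>R B m"
      by (simp add: scaleR_scaleR inverse_eq_divide)
  qed
  ultimately show ?thesis by (rule Lim_transform_eventually)
qed

theorem theorem3:
  fixes P :: "'w measure"
    and N :: "nat \<Rightarrow> 'w \<Rightarrow> real ^ 'd"
    and x0 x1 :: "real ^ 'd"
  assumes "prob_space P"
    and "x0 \<noteq> x1"
    and "norm x0 = norm x1"
    and "prob_space.indep_vars P (\<lambda>_. borel) N UNIV"
    and "\<And>i. distributed P lborel (N i) (\<lambda>x. ennreal (std_gauss_density x))"
  shows "AE \<omega> in P.
           (\<lambda>m. soft_est x0 x1 x0 (\<lambda>i. N i \<omega>) m)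
             \<longlonglongrightarrow> 2 *\<^sub>R (LINT n|std_gauss_vec. (1 / (1 + exp (n \<bullet> (x1 - x0)))) *\<^sub>R n)
         \<and> (\<lambda>m. soft_est x0 x1 x1 (\<lambda>i. N i \<omega>) m)
             \<longlonglongrightarrow> - 2 *\<^sub>R (LINT n|std_gauss_vec. (1 / (1 + exp (n \<bullet> (x1 - x0)))) *\<^sub>R n)"
proof -
  note P = assms(1) and ind = assms(4) and dist = assms(5)
  interpret G: prob_space "std_gauss_vec :: (real^'d) measure" by (rule gauss_prob[OF P dist])
  define p where "p n = 1 / (1 + exp (n \<bullet> (x1 - x0)))" for n :: "real^'d"
  define v where "v = (LINT n|std_gauss_vec. p n *\<^sub>R n)"
  have p_meas[measurable]: "p \<in> borel_measurable borel" unfolding p_def by measurable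
  have q_meas[measurable]: "(\<lambda>n. 1 - p n) \<in> borel_measurable borel" by measurable
  have p_pos: "0 < p n" for n unfolding p_def by (simp add: add_pos_pos)
  have p_le: "p n \<le> 1" for n unfolding p_def by (simp add: add_pos_pos)
  have p_abs: "\<bar>p n\<bar> \<le> 1" for n using p_pos[of n] p_le[of n] by simp
  have q_abs: "\<bar>1 - p n\<bar> \<le> 1" for n using p_pos[of n] p_le[of n] by simp
  have sw0: "soft_weight x0 x1 x0 n = p n" for n
  proof -
    have E: "exp (n \<bullet> (x1 - x0)) = exp (n \<bullet> x1) / exp (n \<bullet> x0)"
      by (simp add: inner_diff_right exp_diff)
    show ?thesis unfolding soft_weight_def p_def E
      by (simp add: field_simps add_pos_pos)
  qed
  have sw1: "soft_weight x0 x1 x1 n = 1 - p n" for n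
  proof -
    have S: "exp (n \<bullet> x0) + exp (n \<bullet> x1) \<noteq> 0" using add_pos_pos[OF exp_gt_zero exp_gt_zero, of "n \<bullet> x0" "n \<bullet> x1"] by linarith
    have "exp (n \<bullet> x0) / (exp (n \<bullet> x0) + exp (n \<bullet> x1)) + exp (n \<bullet> x1) / (exp (n \<bullet> x0) + exp (n \<bullet> x1)) = 1"
      using S by (simp add: add_divide_distrib[symmetric])
    then have "soft_weight x0 x1 x1 n = 1 - soft_weight x0 x1 x0 n"
      unfolding soft_weight_def by linarith
    then show ?thesis by (simp add: sw0)
  qed
  have psym: "p (- n) = 1 - p n" for n
  proof -
    have g: "1 / (1 + exp (- t)) = 1 - 1 / (1 + exp t)" for t :: real
    proof -
      have ne: "1 + exp t \<noteq> 0" using exp_gt_zero[of t] by linarith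
      have "1 / (1 + exp (- t)) = exp t / (1 + exp t)"
        using ne by (simp add: exp_minus field_simps)
      also have "\<dots> = 1 - 1 / (1 + exp t)"
      proof -
        have "1 / (1 + exp t) + exp t / (1 + exp t) = 1"
          using ne by (simp add: add_divide_distrib[symmetric])
        then show ?thesis by linarith
      qed
      finally show ?thesis .
    qed
    show ?thesis unfolding p_def inner_minus_left by (rule g)
  qed
  have pint: "integrable std_gauss_vec p"
    by (rule G.integrable_const_bound[where B=1]) (auto simp: p_abs)
  have Ip: "integral\<^sup>L std_gauss_vec p = 1 / 2"
  proof -
    have "integral\<^sup>L std_gauss_vec (\<lambda>n. p (- n)) = integral\<^sup>L std_gauss_vec p"
      by (rule gauss_sym_integral) simp
    then have "1 - integral\<^sup>L std_gauss_vec p = integral\<^sup>L std_gauss_vec p"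
      unfolding psym using pint by (simp add: G.prob_space[unfolded space_gauss])
    then show ?thesis by simp
  qed
  have Iq: "integral\<^sup>L std_gauss_vec (\<lambda>n. 1 - p n) = 1 / 2"
    using pint Ip by (simp add: G.prob_space[unfolded space_gauss])
  have Iqv: "(LINT n|std_gauss_vec. (1 - p n) *\<^sub>R n) = - v"
  proof -
    have "(LINT n|std_gauss_vec. (\<lambda>n. - (p n *\<^sub>R n)) (- n)) = (LINT n|std_gauss_vec. - (p n *\<^sub>R n))"
      by (rule gauss_sym_integral) simp
    then show ?thesis unfolding v_def psym by simp
  qed
  have sq_bound: "integrable std_gauss_vec (\<lambda>x. (h x)\<^sup>2)"
    if [measurable]: "h \<in> borel_measurable borel" and hb: "\<And>x. \<bar>h x\<bar> \<le> 1" for h :: "real^'d \<Rightarrow> real"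
  proof (rule G.integrable_const_bound[where B=1])
    show "AE x in std_gauss_vec. norm ((h x)\<^sup>2) \<le> 1"
      using hb by (intro AE_I2) (simp add: abs_square_le_1)
  qed measurable
  have a1: "AE \<omega> in P. (\<lambda>m. (\<Sum>i<m. p (N i \<omega>)) / real m) \<longlonglongrightarrow> 1 / 2"
    using slln_gauss[OF P ind dist p_meas sq_bound[OF p_meas p_abs]] unfolding Ip .
  have a2: "AE \<omega> in P. (\<lambda>m. (\<Sum>i<m. 1 - p (N i \<omega>)) / real m) \<longlonglongrightarrow> 1 / 2"
    using slln_gauss[OF P ind dist q_meas sq_bound[OF q_meas q_abs]] unfolding Iq .
  have a3: "AE \<omega> in P. (\<lambda>m. (\<Sum>i<m. p (N i \<omega>) *\<^sub>R N i \<omega>) /\<^sub>R real m) \<longlonglongrightarrow> v"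
    using vec_slln[OF P ind dist p_meas p_abs] unfolding v_def .
  have a4: "AE \<omega> in P. (\<lambda>m. (\<Sum>i<m. (1 - p (N i \<omega>)) *\<^sub>R N i \<omega>) /\<^sub>R real m) \<longlonglongrightarrow> - v"
    using vec_slln[OF P ind dist q_meas q_abs] unfolding Iqv .
  have vdef: "(LINT n|std_gauss_vec. (1 / (1 + exp (n \<bullet> (x1 - x0)))) *\<^sub>R n) = v"
    unfolding v_def p_def ..
  show ?thesis
    using a1 a2 a3 a4
  proof eventually_elim
    case (elim \<omega>)
    have e0: "soft_est x0 x1 x0 (\<lambda>i. N i \<omega>) m = (\<Sum>i<m. p (N i \<omega>) *\<^sub>R N i \<omega>) /\<^sub>R (\<Sum>i<m. p (N i \<omega>))" for m
      unfolding soft_est_def sw0 ..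
    have e1: "soft_est x0 x1 x1 (\<lambda>i. N i \<omega>) m = (\<Sum>i<m. (1 - p (N i \<omega>)) *\<^sub>R N i \<omega>) /\<^sub>R (\<Sum>i<m. 1 - p (N i \<omega>))" for m
      unfolding soft_est_def sw1 ..
    have l0: "(\<lambda>m. soft_est x0 x1 x0 (\<lambda>i. N i \<omega>) m) \<longlonglongrightarrow> v /\<^sub>R (1/2)"
      unfolding e0 by (rule ratio_lim[OF elim(3) elim(1)]) simp
    have l1: "(\<lambda>m. soft_est x0 x1 x1 (\<lambda>i. N i \<omega>) m) \<longlonglongrightarrow> (- v) /\<^sub>R (1/2)"
      unfolding e1 by (rule ratio_lim[OF elim(4) elim(2)]) simp
    show ?case unfolding vdef using l0 l1 by simp
  qed
qed

end
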